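(* Let $f:[c_0,c_N]\to[c_0,c_N]$ satisfy properties P1–P6 with contraction pieces $X_1,\dots,X_N$ and slope $\lambda$, and suppose that every atom of generation $1$ of $f$ contains at most one point of $\Delta_f=\{c_1,\dots,c_{N-1}\}$. Then there exists a well-cutting orbit $\{\xi_r\}_{r\in\mathbb{N}}$ of $f$ such that, for any map $g$ constructed from it as below, every atom of generation $1$ of $g$ contains at most one point of $\Delta_g$. Construction of $g$: $\phi(x)=x+\sum_{n\geqslant1,\ \xi_n<x}\lambda^n$ on $[c_0,c_N]$; $G_r:=(\phi(\xi_r),\phi(\xi_r)+\lambda^r]$ for $r\geqslant1$; $\Delta_g:=\phi(\Delta_f\cup\{\xi_0\})$; $g:[\phi(c_0),\phi(c_N)]\to[\phi(c_0),\phi(c_N)]$ is any map with $g(y)=\phi\circ f\circ\phi^{-1}(y)$ for $y\in\phi([c_0,c_N])\setminus\Delta_g$ and $g(y)=\lambda(y-\phi(\xi_r))+\phi(\xi_{r+1})$ for $y\in G_r$, $r\geqslant1$; its contraction pieces are $Y_1=[d_0,d_1)$, $Y_j=(d_{j-1},d_j)$ ($1<j<N+1$), $Y_{N+1}=(d_N,d_{N+1}]$, where $d_0<\dots<d_{N+1}$ are the points of $\phi(\{c_0,\dots,c_N\}\cup\{\xi_0\})$.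
   Context: Setting: $N\geqslant2$, $c_0<\dots<c_N$, $X=[c_0,c_N]$, $X_1=[c_0,c_1)$, $X_i=(c_{i-1},c_i)$ ($1<i<N$), $X_N=(c_{N-1},c_N]$; $f_i$ the continuous extension of $f|_{X_i}$ to $\overline{X_i}$; $\widetilde X_f:=\bigcap_{n\geqslant0}f^{-n}(X\setminus\Delta_f)$. Atoms of a map $h$ with pieces $Z_i$ on an interval $Z$: $F_i(A):=\overline{h(A\cap Z_i)}$, $A_{i_1\dots i_n}:=F_{i_n}\circ\dots\circ F_{i_1}(Z)$ is an atom of generation $n$ if non-empty (so atoms of generation 1 are the sets $\overline{h(Z_i)}$). $\mathcal{A}_n$ is the set of atoms of generation $n$ of $f$, $\mathcal{A}_n(x):=\{A\in\mathcal{A}_n:\exists t\in\mathbb{N},f^{t+n}(x)\in A\}$; attractor $\Lambda_f:=\bigcap_{n\geqslant1}\bigcup_{A\in\mathcal{A}_n}A$. $\Delta_{lr}(x)$ is the set of $c_i\in\Delta_f$ such that for every $n\geqslant1$ there is $A\in\mathcal{A}_n(x)$ with $c_i\in A$, $f^{t+n}(x)\in A\cap X_i$ and $f^{t'+n}(x)\in A\cap X_{i+1}$ for some $t,t'\in\mathbb{N}$. P1: $f$ is discontinuous at every point of $\Delta_f$ and $f|_{X_i}$ is affine with slope $\lambda\in(0,1)$ for all $i$. P2 (separation): each $f_i$ injective and $f_i(\overline{X_i})\cap f_j(\overline{X_j})=\emptyset$ for $i\neq j$. P3: $\Lambda_f$ is a Cantor set. P4: $\bigcup_{i=1}^{N-1}\{f_i(c_i),f_{i+1}(c_i)\}\subset\widetilde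 X_f$. P5: for some $i$, $\{f^n(f_i(c_i))\}_n$ or $\{f^n(f_{i+1}(c_i))\}_n$ is dense in $\Lambda_f$. P6: $c_i\in\Delta_{lr}(x)$ for all $x\in\widetilde X_f$ and $i\in\{1,\dots,N-1\}$. A well-cutting orbit of $f$ is an orbit $\{\xi_r\}_{r\in\mathbb{N}}$, $\xi_r=f^r(\xi_0)$, with $\xi_0\in\Lambda_f\cap\widetilde X_f$, containing no point of: (1) the boundary points of the gaps of the Cantor set $\Lambda_f$; (2) the forward orbits of $c_0$ and $c_N$; (3) the forward orbits of $f_i(c_i)$ and $f_{i+1}(c_i)$, $i\in\{1,\dots,N-1\}$. *)

theory Defs
  imports "HOL-Analysis.Analysis"
begin

definition piece :: "(nat \<Rightarrow> real) \<Rightarrow> nat \<Rightarrow> nat \<Rightarrow> real set" where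
  "piece c M i = (if i = 1 then {c 0..<c 1}
                  else if i = M then {c (M - 1)<..c M}
                  else {c (i - 1)<..<c i})"

definition ext :: "(real \<Rightarrow> real) \<Rightarrow> real set \<Rightarrow> real \<Rightarrow> real" where
  "ext f A x = (if x \<in> A then f x else Lim (at x within A) f)"

definition fpiece :: "nat \<Rightarrow> (nat \<Rightarrow> real) \<Rightarrow> (real \<Rightarrow> real) \<Rightarrow> nat \<Rightarrow> real \<Rightarrow> real" where
  "fpiece N c f i = ext f (piece c N i)"

definition Delta :: "nat \<Rightarrow> (nat \<Rightarrow> real) \<Rightarrow> real set" where
  "Delta N c = c ` {1..N - 1}"

text \<open>Atoms of generation n of a map h with pieces P 1, ..., P M on the interval Z.
  The word [i1,...,in] gives F_in o ... o F_i1 (Z).\<close>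
definition atoms :: "(real \<Rightarrow> real) \<Rightarrow> real set \<Rightarrow> (nat \<Rightarrow> real set) \<Rightarrow> nat \<Rightarrow> nat \<Rightarrow> real set set" where
  "atoms h Z P M n = {A. \<exists>w. length w = n \<and> set w \<subseteq> {1..M} \<and>
      A = fold (\<lambda>i B. closure (h ` (B \<inter> P i))) w Z \<and> A \<noteq> {}}"

definition atomsf :: "nat \<Rightarrow> (nat \<Rightarrow> real) \<Rightarrow> (real \<Rightarrow> real) \<Rightarrow> nat \<Rightarrow> real set set" where
  "atomsf N c f n = atoms f {c 0..c N} (piece c N) N n"

definition attractor :: "nat \<Rightarrow> (nat \<Rightarrow> real) \<Rightarrow> (real \<Rightarrow> real) \<Rightarrow> real set" where
  "attractor N c f = (\<Inter>n\<in>{1..}. \<Union>(atomsf N c f n))"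

definition Xtilde :: "nat \<Rightarrow> (nat \<Rightarrow> real) \<Rightarrow> (real \<Rightarrow> real) \<Rightarrow> real set" where
  "Xtilde N c f = (\<Inter>n. (f ^^ n) -` ({c 0..c N} - Delta N c))"

definition atoms_of_pt :: "nat \<Rightarrow> (nat \<Rightarrow> real) \<Rightarrow> (real \<Rightarrow> real) \<Rightarrow> nat \<Rightarrow> real \<Rightarrow> real set set" where
  "atoms_of_pt N c f n x = {A \<in> atomsf N c f n. \<exists>t. (f ^^ (t + n)) x \<in> A}"

definition Delta_lr :: "nat \<Rightarrow> (nat \<Rightarrow> real) \<Rightarrow> (real \<Rightarrow> real) \<Rightarrow> real \<Rightarrow> real set" where
  "Delta_lr N c f x = {c i | i. i \<in> {1..N - 1} \<and>
     (\<forall>n\<ge>1. \<exists>A\<in>atoms_of_pt N c f n x. c i \<in> A \<and>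
        (\<exists>t. (f ^^ (t + n)) x \<in> A \<inter> piece c N i) \<and>
        (\<exists>t'. (f ^^ (t' + n)) x \<in> A \<inter> piece c N (i + 1)))}"

definition cantor_set :: "real set \<Rightarrow> bool" where
  "cantor_set S \<longleftrightarrow> S \<noteq> {} \<and> compact S \<and> (\<forall>x\<in>S. x islimpt S) \<and>
     (\<forall>x\<in>S. connected_component_set S x = {x})"

definition gap_endpoints :: "real set \<Rightarrow> real set" where
  "gap_endpoints S = {x. \<exists>G. G \<in> components (- S) \<and> bounded G \<and> x \<in> frontier G}"

definition orbit :: "(real \<Rightarrow> real) \<Rightarrow> real \<Rightarrow> real set" where
  "orbit f x = range (\<lambda>n. (f ^^ n) x)"

definition P1 :: "nat \<Rightarrow> (nat \<Rightarrow> real) \<Rightarrow> (real \<Rightarrow> real) \<Rightarrow> real \<Rightarrow> bool" where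
  "P1 N c f lam \<longleftrightarrow> 0 < lam \<and> lam < 1 \<and>
     (\<forall>x\<in>Delta N c. \<not> continuous (at x within {c 0..c N}) f) \<and>
     (\<forall>i\<in>{1..N}. \<exists>b. \<forall>x\<in>piece c N i. f x = lam * x + b)"

definition P2 :: "nat \<Rightarrow> (nat \<Rightarrow> real) \<Rightarrow> (real \<Rightarrow> real) \<Rightarrow> bool" where
  "P2 N c f \<longleftrightarrow> (\<forall>i\<in>{1..N}. inj_on (fpiece N c f i) (closure (piece c N i))) \<and>
     (\<forall>i\<in>{1..N}. \<forall>j\<in>{1..N}. i \<noteq> j \<longrightarrow>
        fpiece N c f i ` closure (piece c N i) \<inter> fpiece N c f j ` closure (piece c N j) = {})"

definition P3 :: "nat \<Rightarrow> (nat \<Rightarrow> real) \<Rightarrow> (real \<Rightarrow> real) \<Rightarrow> bool" where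
  "P3 N c f \<longleftrightarrow> cantor_set (attractor N c f)"

definition P4 :: "nat \<Rightarrow> (nat \<Rightarrow> real) \<Rightarrow> (real \<Rightarrow> real) \<Rightarrow> bool" where
  "P4 N c f \<longleftrightarrow> (\<forall>i\<in>{1..N - 1}.
     fpiece N c f i (c i) \<in> Xtilde N c f \<and> fpiece N c f (i + 1) (c i) \<in> Xtilde N c f)"

definition P5 :: "nat \<Rightarrow> (nat \<Rightarrow> real) \<Rightarrow> (real \<Rightarrow> real) \<Rightarrow> bool" where
  "P5 N c f \<longleftrightarrow> (\<exists>i\<in>{1..N - 1}.
     attractor N c f \<subseteq> closure (orbit f (fpiece N c f i (c i))) \<or>
     attractor N c f \<subseteq> closure (orbit f (fpiece N c f (i + 1) (c i))))"

definition P6 :: "nat \<Rightarrow> (nat \<Rightarrow> real) \<Rightarrow> (real \<Rightarrow> real) \<Rightarrow> bool" where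
  "P6 N c f \<longleftrightarrow> (\<forall>x\<in>Xtilde N c f. \<forall>i\<in>{1..N - 1}. c i \<in> Delta_lr N c f x)"

definition well_cutting :: "nat \<Rightarrow> (nat \<Rightarrow> real) \<Rightarrow> (real \<Rightarrow> real) \<Rightarrow> real \<Rightarrow> bool" where
  "well_cutting N c f xi0 \<longleftrightarrow> xi0 \<in> attractor N c f \<inter> Xtilde N c f \<and>
     orbit f xi0 \<inter> gap_endpoints (attractor N c f) = {} \<and>
     orbit f xi0 \<inter> orbit f (c 0) = {} \<and>
     orbit f xi0 \<inter> orbit f (c N) = {} \<and>
     (\<forall>i\<in>{1..N - 1}. orbit f xi0 \<inter> orbit f (fpiece N c f i (c i)) = {} \<and>
                      orbit f xi0 \<inter> orbit f (fpiece N c f (i + 1) (c i)) = {})"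

definition phi :: "(real \<Rightarrow> real) \<Rightarrow> real \<Rightarrow> real \<Rightarrow> real \<Rightarrow> real" where
  "phi f lam xi0 x = x + (\<Sum>n. if 1 \<le> n \<and> (f ^^ n) xi0 < x then lam ^ n else 0)"

definition constructed_map :: "nat \<Rightarrow> (nat \<Rightarrow> real) \<Rightarrow> (real \<Rightarrow> real) \<Rightarrow> real \<Rightarrow> real \<Rightarrow> (real \<Rightarrow> real) \<Rightarrow> bool" where
  "constructed_map N c f lam xi0 g \<longleftrightarrow>
     (let \<phi> = phi f lam xi0; \<xi> = (\<lambda>r. (f ^^ r) xi0); Dg = \<phi> ` (Delta N c \<union> {xi0}) in
       g ` {\<phi> (c 0)..\<phi> (c N)} \<subseteq> {\<phi> (c 0)..\<phi> (c N)} \<and>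
       (\<forall>x\<in>{c 0..c N}. \<phi> x \<notin> Dg \<longrightarrow> g (\<phi> x) = \<phi> (f x)) \<and>
       (\<forall>r\<ge>1. \<forall>y\<in>{\<phi> (\<xi> r)<..\<phi> (\<xi> r) + lam ^ r}. g y = lam * (y - \<phi> (\<xi> r)) + \<phi> (\<xi> (r + 1))))"

definition dpts :: "nat \<Rightarrow> (nat \<Rightarrow> real) \<Rightarrow> (real \<Rightarrow> real) \<Rightarrow> real \<Rightarrow> real \<Rightarrow> nat \<Rightarrow> real" where
  "dpts N c f lam xi0 j = sorted_list_of_set (phi f lam xi0 ` (c ` {0..N} \<union> {xi0})) ! j"

definition Delta_g :: "nat \<Rightarrow> (nat \<Rightarrow> real) \<Rightarrow> (real \<Rightarrow> real) \<Rightarrow> real \<Rightarrow> real \<Rightarrow> real set" where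
  "Delta_g N c f lam xi0 = phi f lam xi0 ` (Delta N c \<union> {xi0})"

definition atoms_g :: "nat \<Rightarrow> (nat \<Rightarrow> real) \<Rightarrow> (real \<Rightarrow> real) \<Rightarrow> real \<Rightarrow> real \<Rightarrow> (real \<Rightarrow> real) \<Rightarrow> nat \<Rightarrow> real set set" where
  "atoms_g N c f lam xi0 g n =
     atoms g {phi f lam xi0 (c 0)..phi f lam xi0 (c N)} (piece (dpts N c f lam xi0) (N + 1)) (N + 1) n"

end

theory Submission
  imports Defs
begin


locale orb =
  fixes f :: "real \<Rightarrow> real" and lam xi0 :: real
  assumes lam0: "0 < lam" and lam1: "lam < 1"
begin

definition xi :: "nat \<Rightarrow> real" where "xi n = (f ^^ n) xi0"
definition w :: "(nat \<Rightarrow> bool) \<Rightarrow> real" where "w P = (\<Sum>n. if P n then lam ^ n else 0)"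

lemma summ: "summable (\<lambda>n. if P n then lam ^ n else (0::real))"
  by (rule summable_comparison_test[where g="\<lambda>n. lam^n"]) (use lam0 lam1 in \<open>auto simp: summable_geometric\<close>)

lemma w_nonneg: "0 \<le> w P"
  unfolding w_def using lam0 by (intro suminf_nonneg summ) auto

lemma w_mono: "(\<And>n. P n \<Longrightarrow> Q n) \<Longrightarrow> w P \<le> w Q"
  unfolding w_def using lam0 by (intro suminf_le summ) auto

lemma w_disj: "(\<And>n. \<not> (P n \<and> Q n)) \<Longrightarrow> w (\<lambda>n. P n \<or> Q n) = w P + w Q"
  unfolding w_def
  by (subst suminf_add[OF summ summ]) (rule arg_cong[where f=suminf], auto)

lemma w_single: "w (\<lambda>n. n = r) = lam ^ r"
proof -
  have "(\<lambda>n. if n = r then lam ^ n else 0) sums lam ^ r"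
    using sums_single[of r "\<lambda>n. lam ^ n"] by simp
  thus ?thesis unfolding w_def by (simp add: sums_iff)
qed

lemma w_tail: "\<exists>K. \<forall>P. (\<forall>n. P n \<longrightarrow> K \<le> n) \<longrightarrow> w P < e" if epos: "0 < e"
proof -
  obtain K where K: "lam ^ K < e * (1 - lam)"
    using real_arch_pow_inv[of "e * (1 - lam)" lam] lam1 epos by (auto simp: mult_pos_pos)
  show ?thesis
  proof (intro exI allI impI)
    fix P assume P: "\<forall>n. P n \<longrightarrow> K \<le> n"
    have sg: "summable (\<lambda>i. lam ^ (i + K))"
      using summable_ignore_initial_segment[OF summable_geometric[of lam], of K] lam0 lam1 by simp
    have "w P = (\<Sum>i. (if P (i+K) then lam ^ (i+K) else 0)) + (\<Sum>i<K. if P i then lam ^ i else 0)"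
      unfolding w_def by (rule suminf_split_initial_segment[OF summ])
    also have "(\<Sum>i<K. if P i then lam ^ i else 0) = 0"
      using P by (intro sum.neutral) auto
    also have "(\<Sum>i. (if P (i+K) then lam ^ (i+K) else 0)) \<le> (\<Sum>i. lam ^ (i+K))"
      by (rule suminf_le) (use lam0 summable_ignore_initial_segment[OF summ[of P], of K] sg in auto)
    also have "(\<Sum>i. lam ^ (i+K)) = lam ^ K * (\<Sum>i. lam ^ i)"
      by (subst suminf_mult[symmetric]) (use lam0 lam1 in \<open>auto simp: power_add summable_geometric mult.commute\<close>)
    also have "\<dots> = lam ^ K / (1 - lam)"
      using suminf_geometric[of lam] lam0 lam1 by simp
    also have "\<dots> < e" using K lam1 by (simp add: divide_less_eq)
    finally show "w P < e" by simp
  qed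
qed

definition phiR :: "real \<Rightarrow> real" where "phiR x = x + w (\<lambda>n. 1 \<le> n \<and> xi n \<le> x)"
abbreviation ph where "ph \<equiv> phi f lam xi0"

lemma phi_eq: "ph x = x + w (\<lambda>n. 1 \<le> n \<and> xi n < x)"
  unfolding phi_def w_def xi_def by simp

lemma M1: "x < x' \<Longrightarrow> phiR x < ph x'"
  proof -
  assume "x < x'"
  hence "w (\<lambda>n. 1 \<le> n \<and> xi n \<le> x) \<le> w (\<lambda>n. 1 \<le> n \<and> xi n < x')" by (intro w_mono) auto
  thus ?thesis unfolding phi_eq phiR_def using \<open>x < x'\<close> by linarith
qed

lemma M2: "ph x \<le> phiR x"
  proof -
  have "w (\<lambda>n. 1 \<le> n \<and> xi n < x) \<le> w (\<lambda>n. 1 \<le> n \<and> xi n \<le> x)" by (intro w_mono) auto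
  thus ?thesis unfolding phi_eq phiR_def by linarith
qed

lemma ph_strict: "x < x' \<Longrightarrow> ph x < ph x'"
  using M1 M2 by (meson le_less_trans)

lemma ph_mono: "x \<le> x' \<Longrightarrow> ph x \<le> ph x'"
  using ph_strict by (cases "x = x'") (auto simp: order_le_less)

lemma phiR_mono: "x \<le> x' \<Longrightarrow> phiR x \<le> phiR x'"
  proof -
  assume "x \<le> x'"
  hence "w (\<lambda>n. 1 \<le> n \<and> xi n \<le> x) \<le> w (\<lambda>n. 1 \<le> n \<and> xi n \<le> x')" by (intro w_mono) auto
  thus ?thesis unfolding phiR_def using \<open>x \<le> x'\<close> by linarith
qed

lemma M3: "1 \<le> r \<Longrightarrow> ph (xi r) + lam ^ r \<le> phiR (xi r)"
proof -
  assume r: "1 \<le> r"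
  have "w (\<lambda>n. (1 \<le> n \<and> xi n < xi r) \<or> n = r) = w (\<lambda>n. 1 \<le> n \<and> xi n < xi r) + w (\<lambda>n. n = r)"
    by (rule w_disj) auto
  moreover have "w (\<lambda>n. (1 \<le> n \<and> xi n < xi r) \<or> n = r) \<le> w (\<lambda>n. 1 \<le> n \<and> xi n \<le> xi r)"
    by (rule w_mono) (use r in auto)
  ultimately show ?thesis unfolding phi_eq phiR_def w_single by simp
qed

lemma M5: "(\<forall>n\<ge>1. xi n \<noteq> x) \<Longrightarrow> phiR x = ph x"
  unfolding phi_eq phiR_def
  by (rule arg_cong[where f="\<lambda>P. x + w P"]) (auto simp: fun_eq_iff)

lemma diffL: "t < x \<Longrightarrow> ph x - ph t = (x - t) + w (\<lambda>n. 1 \<le> n \<and> t \<le> xi n \<and> xi n < x)"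
proof -
  assume tx: "t < x"
  have "w (\<lambda>n. (1 \<le> n \<and> xi n < t) \<or> (1 \<le> n \<and> t \<le> xi n \<and> xi n < x)) =
        w (\<lambda>n. 1 \<le> n \<and> xi n < t) + w (\<lambda>n. 1 \<le> n \<and> t \<le> xi n \<and> xi n < x)"
    by (rule w_disj) auto
  moreover have "(\<lambda>n. (1 \<le> n \<and> xi n < t) \<or> (1 \<le> n \<and> t \<le> xi n \<and> xi n < x)) = (\<lambda>n. 1 \<le> n \<and> xi n < x)"
    using tx by (auto simp: fun_eq_iff)
  ultimately show ?thesis unfolding phi_eq by simp
qed

lemma diffR: "x < t \<Longrightarrow> ph t - phiR x = (t - x) + w (\<lambda>n. 1 \<le> n \<and> x < xi n \<and> xi n < t)"
proof -
  assume tx: "x < t"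
  have "w (\<lambda>n. (1 \<le> n \<and> xi n \<le> x) \<or> (1 \<le> n \<and> x < xi n \<and> xi n < t)) =
        w (\<lambda>n. 1 \<le> n \<and> xi n \<le> x) + w (\<lambda>n. 1 \<le> n \<and> x < xi n \<and> xi n < t)"
    by (rule w_disj) auto
  moreover have "(\<lambda>n. (1 \<le> n \<and> xi n \<le> x) \<or> (1 \<le> n \<and> x < xi n \<and> xi n < t)) = (\<lambda>n. 1 \<le> n \<and> xi n < t)"
    using tx by (auto simp: fun_eq_iff)
  ultimately show ?thesis unfolding phi_eq phiR_def by simp
qed

lemma E1: "0 < e \<Longrightarrow> \<exists>d>0. \<forall>t. x - d < t \<longrightarrow> t < x \<longrightarrow> ph x - ph t < e"
proof -
  assume e: "0 < e"
  then obtain K where K: "\<forall>P. (\<forall>n. P n \<longrightarrow> K \<le> n) \<longrightarrow> w P < e/2"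
    using w_tail[of "e/2"] by auto
  define D where "D = {xi n | n. n < K \<and> xi n < x}"
  have fD: "finite D" unfolding D_def by simp
  define d where "d = Min (insert (e/2) ((\<lambda>z. x - z) ` D))"
  have dpos: "d > 0" unfolding d_def using fD e by (subst Min_gr_iff) (auto simp: D_def)
  have dle1: "d \<le> e/2" unfolding d_def using fD by (intro Min_le) auto
  have dle2: "\<And>z. z \<in> D \<Longrightarrow> d \<le> x - z" unfolding d_def using fD by (intro Min_le) auto
  note dle = dle1 dle2
  show ?thesis
  proof (intro exI[of _ d] conjI allI impI dpos)
    fix t assume t1: "x - d < t" and t2: "t < x"
    have "w (\<lambda>n. 1 \<le> n \<and> t \<le> xi n \<and> xi n < x) < e/2"
    proof (rule K[rule_format])
      fix n assume n: "1 \<le> n \<and> t \<le> xi n \<and> xi n < x"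
      show "K \<le> n"
      proof (rule ccontr)
        assume "\<not> K \<le> n"
        hence "xi n \<in> D" using n unfolding D_def by auto
        hence "d \<le> x - xi n" by (rule dle)
        thus False using n t1 by simp
      qed
    qed
    thus "ph x - ph t < e" using diffL[OF t2] dle t1 by simp
  qed
qed

lemma E2: "0 < e \<Longrightarrow> \<exists>d>0. \<forall>t. x < t \<longrightarrow> t < x + d \<longrightarrow> ph t - phiR x < e"
proof -
  assume e: "0 < e"
  then obtain K where K: "\<forall>P. (\<forall>n. P n \<longrightarrow> K \<le> n) \<longrightarrow> w P < e/2"
    using w_tail[of "e/2"] by auto
  define D where "D = {xi n | n. n < K \<and> x < xi n}"
  have fD: "finite D" unfolding D_def by simp
  define d where "d = Min (insert (e/2) ((\<lambda>z. z - x) ` D))"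
  have dpos: "d > 0" unfolding d_def using fD e by (subst Min_gr_iff) (auto simp: D_def)
  have dle1: "d \<le> e/2" unfolding d_def using fD by (intro Min_le) auto
  have dle2: "\<And>z. z \<in> D \<Longrightarrow> d \<le> z - x" unfolding d_def using fD by (intro Min_le) auto
  note dle = dle1 dle2
  show ?thesis
  proof (intro exI[of _ d] conjI allI impI dpos)
    fix t assume t1: "x < t" and t2: "t < x + d"
    have "w (\<lambda>n. 1 \<le> n \<and> x < xi n \<and> xi n < t) < e/2"
    proof (rule K[rule_format])
      fix n assume n: "1 \<le> n \<and> x < xi n \<and> xi n < t"
      show "K \<le> n"
      proof (rule ccontr)
        assume "\<not> K \<le> n"
        hence "xi n \<in> D" using n unfolding D_def by auto
        hence "d \<le> xi n - x" by (rule dle)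
        thus False using n t2 by simp
      qed
    qed
    thus "ph t - phiR x < e" using diffR[OF t1] dle t2 by simp
  qed
qed

lemma Cov0:
  assumes ab: "a \<le> b" and y: "ph a \<le> y" "y \<le> ph b"
  shows "\<exists>x\<in>{a..b}. ph x \<le> y \<and> y \<le> phiR x"
proof -
  define S where "S = {t\<in>{a..b}. ph t \<le> y}"
  define x where "x = Sup S"
  have aS: "a \<in> S" using ab y unfolding S_def by auto
  have bdd: "bdd_above S" unfolding S_def by (auto intro: bdd_aboveI[of _ b])
  have ax: "a \<le> x" unfolding x_def using aS bdd by (rule cSup_upper)
  have xb: "x \<le> b" unfolding x_def using aS by (intro cSup_least) (auto simp: S_def)
  have le1: "ph x \<le> y"
  proof (rule ccontr)
    assume "\<not> ph x \<le> y"
    hence e: "0 < ph x - y" by simp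
    obtain d where d: "d > 0" "\<forall>t. x - d < t \<longrightarrow> t < x \<longrightarrow> ph x - ph t < ph x - y"
      using E1[OF e] by blast
    obtain t where t: "t \<in> S" "x - d < t"
    proof -
      have "x - d < Sup S" using d(1) unfolding x_def by simp
      from less_cSupE[OF this] aS show ?thesis using that by blast
    qed
    have "t \<le> x" unfolding x_def using t(1) bdd by (rule cSup_upper)
    moreover have "t \<noteq> x" using t(1) \<open>\<not> ph x \<le> y\<close> unfolding S_def by auto
    ultimately have "t < x" by simp
    hence "ph x - ph t < ph x - y" using d t by blast
    thus False using t(1) unfolding S_def by simp
  qed
  have le2: "y \<le> phiR x"
  proof (rule ccontr)
    assume nle: "\<not> y \<le> phiR x"
    hence e: "0 < y - phiR x" by simp
    have xb': "x < b"
    proof (rule ccontr)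
      assume "\<not> x < b" hence "x = b" using xb by simp
      thus False using nle y M2[of b] by simp
    qed
    obtain d where d: "d > 0" "\<forall>t. x < t \<longrightarrow> t < x + d \<longrightarrow> ph t - phiR x < y - phiR x"
      using E2[OF e] by blast
    define t where "t = min (x + d/2) b"
    have t: "x < t" "t < x + d" "t \<le> b" using d xb' unfolding t_def by auto
    hence "ph t - phiR x < y - phiR x" using d(2) by blast
    hence "ph t < y" by simp
    hence "t \<in> S" unfolding S_def using t ax by auto
    hence "t \<le> x" unfolding x_def using bdd by (rule cSup_upper)
    thus False using t by simp
  qed
  show ?thesis using le1 le2 ax xb by auto
qed

end

locale orbi = orb +
  assumes inj: "\<And>m n. (f ^^ m) xi0 = (f ^^ n) xi0 \<Longrightarrow> m = n"
begin

lemma M4: "1 \<le> r \<Longrightarrow> phiR (xi r) = ph (xi r) + lam ^ r"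
proof -
  assume r: "1 \<le> r"
  have "w (\<lambda>n. (1 \<le> n \<and> xi n < xi r) \<or> n = r) = w (\<lambda>n. 1 \<le> n \<and> xi n < xi r) + w (\<lambda>n. n = r)"
    by (rule w_disj) auto
  moreover have "(\<lambda>n. (1 \<le> n \<and> xi n < xi r) \<or> n = r) = (\<lambda>n. 1 \<le> n \<and> xi n \<le> xi r)"
    using r inj unfolding xi_def by (auto simp: fun_eq_iff order_le_less)
  ultimately show ?thesis unfolding phi_eq phiR_def w_single by simp
qed

lemma Cov:
  assumes ab: "a \<le> b" and y: "ph a \<le> y" "y \<le> ph b"
  shows "(\<exists>x\<in>{a..b}. y = ph x) \<or> (\<exists>r\<ge>1. ph (xi r) < y \<and> y \<le> ph (xi r) + lam ^ r)"
proof -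
  obtain x where x: "x \<in> {a..b}" "ph x \<le> y" "y \<le> phiR x" using Cov0[OF assms] by blast
  show ?thesis
  proof (cases "y = ph x")
    case True thus ?thesis using x by blast
  next
    case False
    hence "phiR x \<noteq> ph x" using x by simp
    then obtain r where r: "r \<ge> 1" "xi r = x" using M5 by blast
    thus ?thesis using M4[OF r(1)] x False by auto
  qed
qed

end



lemma piece_iff:
  assumes "2 \<le> M" "i \<in> {1..M}"
  shows "x \<in> piece d M i \<longleftrightarrow> d (i-1) \<le> x \<and> x \<le> d i \<and> (i \<noteq> 1 \<longrightarrow> d (i-1) < x) \<and> (i \<noteq> M \<longrightarrow> x < d i)"
  using assms by (auto simp: piece_def)

locale setting =
  fixes N :: nat and c :: "nat \<Rightarrow> real" and f :: "real \<Rightarrow> real" and lam :: real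
  assumes N2: "N \<ge> 2" and cmono: "strict_mono_on {0..N} c"
    and fZ: "f ` {c 0..c N} \<subseteq> {c 0..c N}"
    and p1: "P1 N c f lam" and p2: "P2 N c f"
begin

abbreviation Z where "Z \<equiv> {c 0..c N}"
abbreviation X where "X \<equiv> piece c N"
abbreviation Dl where "Dl \<equiv> Delta N c"

lemma lam0: "0 < lam" and lam1: "lam < 1" using p1 by (auto simp: P1_def)

lemma c_less: "i < j \<Longrightarrow> j \<le> N \<Longrightarrow> c i < c j"
  using cmono by (auto simp: strict_mono_on_def)

lemma c_le: "i \<le> j \<Longrightarrow> j \<le> N \<Longrightarrow> c i \<le> c j"
  using c_less by (cases "i = j") (auto simp: order_le_less)

lemma X_iff: "i \<in> {1..N} \<Longrightarrow> x \<in> X i \<longleftrightarrow> c (i-1) \<le> x \<and> x \<le> c i \<and> (i \<noteq> 1 \<longrightarrow> c (i-1) < x) \<and> (i \<noteq> N \<longrightarrow> x < c i)"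
  using piece_iff[OF N2] by blast

lemma X_Z: "i \<in> {1..N} \<Longrightarrow> X i \<subseteq> Z"
proof
  fix x assume i: "i \<in> {1..N}" and x: "x \<in> X i"
  have "c 0 \<le> c (i-1)" "c i \<le> c N" using i by (auto intro: c_le)
  thus "x \<in> Z" using X_iff[OF i] x by auto
qed

lemma Delta_bounds: "p \<in> Dl \<Longrightarrow> c 0 < p \<and> p < c N"
  unfolding Delta_def using c_less by auto

lemma Delta_Z: "Dl \<subseteq> Z" using Delta_bounds by fastforce

lemma in_piece:
  assumes x: "x \<in> Z" "x \<notin> Dl"
  shows "\<exists>i\<in>{1..N}. x \<in> X i"
proof (cases "x = c N")
  case True
  have "c (N-1) < c N" using N2 by (intro c_less) auto
  thus ?thesis using True N2 X_iff[of N x] by (intro bexI[of _ N]) auto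
next
  case False
  hence xl: "x < c N" using x by auto
  define i where "i = (LEAST i. x < c i)"
  have ci: "x < c i" unfolding i_def by (rule LeastI[of _ N]) (rule xl)
  have iN: "i \<le> N" unfolding i_def by (rule Least_le) (rule xl)
  have i0: "i \<noteq> 0"
  proof
    assume "i = 0" with ci have "x < c 0" by simp
    with x show False by auto
  qed
  have lo: "c (i-1) \<le> x"
  proof (rule ccontr)
    assume "\<not> c (i-1) \<le> x"
    hence "x < c (i-1)" by simp
    hence "i \<le> i - 1" unfolding i_def by (rule Least_le)
    thus False using i0 by simp
  qed
  have ne: "i \<noteq> 1 \<Longrightarrow> c (i-1) \<noteq> x"
  proof
    assume "i \<noteq> 1" "c (i-1) = x"
    hence "x \<in> Dl" unfolding Delta_def using i0 iN by (intro image_eqI[of _ _ "i-1"]) auto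
    thus False using x by simp
  qed
  have iI: "i \<in> {1..N}" using i0 iN by auto
  have "c (i-1) \<le> x \<and> x \<le> c i \<and> (i \<noteq> 1 \<longrightarrow> c (i-1) < x) \<and> (i \<noteq> N \<longrightarrow> x < c i)"
  proof (intro conjI impI)
    show "c (i-1) \<le> x" by (rule lo)
    show "x \<le> c i" using ci by simp
    show "x < c i" by (rule ci)
    assume "i \<noteq> 1"
    thus "c (i-1) < x" using lo ne by (simp add: order_le_less)
  qed
  hence "x \<in> X i" using X_iff[OF iI] by blast
  thus ?thesis using iI by blast
qed

lemma piece_order:
  assumes i: "i \<in> {1..N}" "i' \<in> {1..N}" "i < i'" and x: "x \<in> X i" "x' \<in> X i'"
  shows "x < c i \<and> c i < x' \<and> c i \<in> Dl"
proof -
  have a: "x < c i" using X_iff[OF i(1)] x i by auto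
  have "c i \<le> c (i'-1)" using i by (intro c_le) auto
  moreover have "c (i'-1) < x'" using X_iff[OF i(2)] x i by auto
  ultimately have b: "c i < x'" by simp
  have "c i \<in> Dl" unfolding Delta_def using i by auto
  thus ?thesis using a b by simp
qed

definition bb :: "nat \<Rightarrow> real" where "bb i = (SOME b. \<forall>x\<in>X i. f x = lam * x + b)"

lemma bb: "i \<in> {1..N} \<Longrightarrow> x \<in> X i \<Longrightarrow> f x = lam * x + bb i"
proof -
  assume i: "i \<in> {1..N}" and x: "x \<in> X i"
  have "\<forall>i\<in>{1..N}. \<exists>b. \<forall>x\<in>X i. f x = lam * x + b" using p1 unfolding P1_def by (elim conjE)
  hence "\<exists>b. \<forall>x\<in>X i. f x = lam * x + b" using i by (rule bspec)
  hence "\<forall>x\<in>X i. f x = lam * x + bb i" unfolding bb_def by (rule someI_ex)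
  thus ?thesis using x by blast
qed

definition E :: "nat \<Rightarrow> real set" where "E i = closure (f ` X i)"
definition ea :: "nat \<Rightarrow> real" where "ea i = lam * c (i-1) + bb i"
definition eb :: "nat \<Rightarrow> real" where "eb i = lam * c i + bb i"

lemma cc: "i \<in> {1..N} \<Longrightarrow> c (i-1) < c i" by (intro c_less) auto

lemma ea_eb: "i \<in> {1..N} \<Longrightarrow> ea i < eb i"
  unfolding ea_def eb_def using cc lam0 by simp

lemma X_closure: "i \<in> {1..N} \<Longrightarrow> closure (X i) = {c (i-1)..c i}"
proof -
  assume i: "i \<in> {1..N}"
  have s1: "X i \<subseteq> {c (i-1)..c i}"
  proof
    fix x assume "x \<in> X i" thus "x \<in> {c (i-1)..c i}" using X_iff[OF i] by simp
  qed
  have s2: "{c (i-1)<..<c i} \<subseteq> X i"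
  proof
    fix x assume "x \<in> {c (i-1)<..<c i}" thus "x \<in> X i" using X_iff[OF i] by simp
  qed
  have "closure (X i) \<subseteq> {c (i-1)..c i}" using closure_mono[OF s1] by simp
  moreover have "closure {c (i-1)<..<c i} \<subseteq> closure (X i)" by (rule closure_mono[OF s2])
  hence "{c (i-1)..c i} \<subseteq> closure (X i)" using closure_greaterThanLessThan[OF cc[OF i]] by simp
  ultimately show ?thesis by (rule antisym)
qed

lemma E_eq: "i \<in> {1..N} \<Longrightarrow> E i = {ea i..eb i}"
proof -
  assume i: "i \<in> {1..N}"
  have sub: "f ` X i \<subseteq> {ea i..eb i}"
  proof
    fix y assume "y \<in> f ` X i"
    then obtain x where x: "x \<in> X i" "y = f x" by blast
    have "c (i-1) \<le> x" "x \<le> c i" using X_iff[OF i] x by simp_all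
    hence "lam * c (i-1) \<le> lam * x" "lam * x \<le> lam * c i" using lam0 by simp_all
    thus "y \<in> {ea i..eb i}" using bb[OF i x(1)] x(2) unfolding ea_def eb_def by simp
  qed
  have "E i \<subseteq> {ea i..eb i}" unfolding E_def by (rule closure_minimal[OF sub closed_atLeastAtMost])
  moreover have "{ea i<..<eb i} \<subseteq> f ` X i"
  proof
    fix y assume y: "y \<in> {ea i<..<eb i}"
    define x where "x = (y - bb i) / lam"
    have "lam * c (i-1) < y - bb i" "y - bb i < lam * c i" using y unfolding ea_def eb_def by simp_all
    hence "c (i-1) < x" "x < c i" using lam0 unfolding x_def
      by (simp_all add: pos_less_divide_eq pos_divide_less_eq mult.commute)
    hence xX: "x \<in> X i" using X_iff[OF i] by simp
    have "f x = y" using bb[OF i xX] lam0 unfolding x_def by simp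
    thus "y \<in> f ` X i" using xX by blast
  qed
  hence "closure {ea i<..<eb i} \<subseteq> E i" unfolding E_def by (rule closure_mono)
  hence "{ea i..eb i} \<subseteq> E i" using closure_greaterThanLessThan[OF ea_eb[OF i]] by simp
  ultimately show ?thesis by (rule antisym)
qed

lemma fpiece_val:
  assumes i: "i \<in> {1..N}" and x: "x \<in> {c (i-1)..c i}"
  shows "fpiece N c f i x = lam * x + bb i"
proof (cases "x \<in> X i")
  case True thus ?thesis unfolding fpiece_def ext_def using bb[OF i True] by simp
next
  case False
  have "x \<in> closure (X i)" using X_closure[OF i] x by simp
  hence lp: "x islimpt X i" using False unfolding closure_def by simp
  have "(f \<longlongrightarrow> lam * x + bb i) (at x within X i)"
  proof (rule Lim_transform_eventually)
    show "((\<lambda>t. lam * t + bb i) \<longlongrightarrow> lam * x + bb i) (at x within X i)"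
      by (intro tendsto_intros)
    have "\<forall>t\<in>X i. t \<noteq> x \<and> dist t x < 1 \<longrightarrow> lam * t + bb i = f t"
      using bb[OF i] by simp
    thus "\<forall>\<^sub>F t in at x within X i. lam * t + bb i = f t"
      unfolding eventually_at by (intro exI[of _ 1]) simp
  qed
  hence "Lim (at x within X i) f = lam * x + bb i"
    by (rule tendsto_Lim[rotated]) (simp add: trivial_limit_within lp)
  thus ?thesis unfolding fpiece_def ext_def using False by simp
qed

lemma E_sub_fpiece: "i \<in> {1..N} \<Longrightarrow> E i \<subseteq> fpiece N c f i ` closure (X i)"
proof
  fix y assume i: "i \<in> {1..N}" and y: "y \<in> E i"
  define x where "x = (y - bb i) / lam"
  have "lam * c (i-1) \<le> y - bb i" "y - bb i \<le> lam * c i" using y E_eq[OF i] unfolding ea_def eb_def by simp_all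
  hence "c (i-1) \<le> x" "x \<le> c i" using lam0 unfolding x_def
    by (simp_all add: pos_le_divide_eq pos_divide_le_eq mult.commute)
  hence xr: "x \<in> {c (i-1)..c i}" by simp
  have "fpiece N c f i x = y" using fpiece_val[OF i xr] lam0 unfolding x_def by simp
  moreover have "x \<in> closure (X i)" using xr X_closure[OF i] by simp
  ultimately show "y \<in> fpiece N c f i ` closure (X i)" by (metis image_eqI)
qed

lemma E_disj: "i \<in> {1..N} \<Longrightarrow> j \<in> {1..N} \<Longrightarrow> i \<noteq> j \<Longrightarrow> E i \<inter> E j = {}"
proof -
  assume ij: "i \<in> {1..N}" "j \<in> {1..N}" "i \<noteq> j"
  have "\<forall>i\<in>{1..N}. \<forall>j\<in>{1..N}. i \<noteq> j \<longrightarrow>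
        fpiece N c f i ` closure (X i) \<inter> fpiece N c f j ` closure (X j) = {}"
    using p2 unfolding P2_def by (elim conjE)
  hence "fpiece N c f i ` closure (X i) \<inter> fpiece N c f j ` closure (X j) = {}" using ij by blast
  thus ?thesis using E_sub_fpiece[OF ij(1)] E_sub_fpiece[OF ij(2)] by blast
qed

lemma E_ne: "i \<in> {1..N} \<Longrightarrow> E i \<noteq> {}"
  using E_eq ea_eb by (simp add: less_imp_le)

lemma E_atom: "i \<in> {1..N} \<Longrightarrow> E i \<in> atomsf N c f 1"
proof -
  assume i: "i \<in> {1..N}"
  have ZX: "Z \<inter> X i = X i" using X_Z[OF i] by blast
  have "E i = fold (\<lambda>i B. closure (f ` (B \<inter> piece c N i))) [i] Z" unfolding E_def using ZX by simp
  thus ?thesis unfolding atomsf_def atoms_def using i E_ne[OF i]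
    by (intro CollectI exI[of _ "[i]"]) simp
qed

lemma atom1: "A \<in> atomsf N c f 1 \<Longrightarrow> \<exists>i\<in>{1..N}. A = E i"
proof -
  assume "A \<in> atomsf N c f 1"
  then obtain w where w: "length w = 1" "set w \<subseteq> {1..N}"
    "A = fold (\<lambda>i B. closure (f ` (B \<inter> X i))) w Z"
    unfolding atomsf_def atoms_def by blast
  then obtain i where wi: "w = [i]" by (cases w) auto
  hence i: "i \<in> {1..N}" using w by simp
  have ZX: "Z \<inter> X i = X i" using X_Z[OF i] by blast
  have "A = E i" using w(3) wi ZX unfolding E_def by simp
  thus ?thesis using i by blast
qed

lemma E_closed: "closed (E i)" unfolding E_def by simp

end



lemma perfect_uncountable:
  fixes S :: "real set"
  assumes cl: "closed S" and ne: "S \<noteq> {}" and pf: "\<forall>x\<in>S. x islimpt S"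
  shows "uncountable S"
proof
  assume cS: "countable S"
  define G where "G = (\<lambda>x. S - {x}) ` S"
  have "countable G" unfolding G_def using cS by (rule countable_image)
  moreover have "openin (top_of_set S) T \<and> S \<subseteq> closure T" if "T \<in> G" for T
  proof -
    obtain x where x: "x \<in> S" "T = S - {x}" using \<open>T \<in> G\<close> unfolding G_def by blast
    have "T = S \<inter> - {x}" using x by blast
    hence op: "openin (top_of_set S) T" using openin_open_Int[of "- {x}" S] by (simp add: open_Compl)
    have "S \<subseteq> closure T"
    proof
      fix y assume y: "y \<in> S"
      show "y \<in> closure T"
      proof (cases "y = x")
        case False
        hence "y \<in> T" using y x(2) by simp
        thus ?thesis using closure_subset by (rule subsetD[rotated])
      next
        case True
        have "x islimpt S" using pf x(1) by (rule bspec)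
        hence "x \<in> closure (S - {x})" by (simp add: islimpt_in_closure)
        thus ?thesis using True x(2) by (simp only:)
      qed
    qed
    with op show ?thesis by (rule conjI)
  qed
  ultimately have "S \<subseteq> closure (\<Inter>G)" by (rule Baire[OF cl])
  moreover have "\<Inter>G = {}"
  proof (rule ccontr)
    assume "\<Inter>G \<noteq> {}"
    then obtain z where z: "z \<in> \<Inter>G" by blast
    obtain x0 where "x0 \<in> S" using ne by blast
    have "S - {x0} \<in> G" unfolding G_def using \<open>x0 \<in> S\<close> by (rule imageI)
    hence "z \<in> S - {x0}" using z by (rule InterD[rotated])
    hence "z \<in> S" by simp
    hence "S - {z} \<in> G" unfolding G_def by (rule imageI)
    hence "z \<in> S - {z}" using z by (rule InterD[rotated])
    thus False by simp
  qed
  ultimately show False using ne by simp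
qed

lemma frontier_bounded_interval:
  fixes G :: "real set"
  assumes op: "open G" and co: "connected G" and bd: "bounded G" and ne: "G \<noteq> {}"
    and x: "x \<in> frontier G"
  shows "x = Inf G \<or> x = Sup G"
proof -
  have ba: "bdd_above G" and bb: "bdd_below G" using bd by (auto intro: bounded_imp_bdd_above bounded_imp_bdd_below)
  have "G \<subseteq> {Inf G..Sup G}"
  proof
    fix y assume "y \<in> G"
    thus "y \<in> {Inf G..Sup G}" using cInf_lower[OF _ bb] cSup_upper[OF _ ba] by simp
  qed
  hence "closure G \<subseteq> {Inf G..Sup G}" by (rule closure_minimal) simp
  moreover have "x \<in> closure G" "x \<notin> G" using x interior_open[OF op] unfolding frontier_def by simp_all
  ultimately have xr: "Inf G \<le> x" "x \<le> Sup G" by auto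
  show ?thesis
  proof (rule ccontr)
    assume "\<not> (x = Inf G \<or> x = Sup G)"
    hence "Inf G < x" "x < Sup G" using xr by (simp_all add: order_le_less)
    then obtain a b where ab: "a \<in> G" "a < x" "b \<in> G" "x < b"
      using cInf_lessD[OF ne] less_cSupD[OF ne] by metis
    have "is_interval G" using co by (simp add: is_interval_connected_1)
    hence "x \<in> G" using ab unfolding is_interval_1 by (metis less_imp_le)
    thus False using \<open>x \<notin> G\<close> by simp
  qed
qed

lemma gap_countable:
  fixes K :: "real set"
  assumes "closed K"
  shows "countable (gap_endpoints K)"
proof -
  have opc: "open C" if "C \<in> components (- K)" for C
    using open_components[OF _ that] assms by (simp add: open_Compl)
  have "pairwise disjnt (components (- K))"
    unfolding pairwise_def disjnt_def using components_nonoverlap by metis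
  hence cc: "countable (components (- K))"
    using countable_disjoint_open_subsets opc by blast
  have "gap_endpoints K \<subseteq> (\<Union>C\<in>components (- K). {Inf C, Sup C})"
  proof
    fix x assume "x \<in> gap_endpoints K"
    then obtain C where C: "C \<in> components (- K)" "bounded C" "x \<in> frontier C"
      unfolding gap_endpoints_def by blast
    have "x = Inf C \<or> x = Sup C"
      using frontier_bounded_interval[OF opc[OF C(1)] in_components_connected[OF C(1)] C(2)
          in_components_nonempty[OF C(1)] C(3)] .
    thus "x \<in> (\<Union>C\<in>components (- K). {Inf C, Sup C})" using C(1) by blast
  qed
  moreover have "countable (\<Union>C\<in>components (- K). {Inf C, Sup C})"
    using cc by (intro countable_UN) auto
  ultimately show ?thesis by (rule countable_subset)
qed

context setting begin

abbreviation FF where "FF \<equiv> (\<lambda>i B. closure (f ` (B \<inter> piece c N i)))"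

lemma FF_mono: "A \<subseteq> B \<Longrightarrow> FF i A \<subseteq> FF i B"
  by (intro closure_mono image_mono) blast

lemma fold_mono: "A \<subseteq> B \<Longrightarrow> fold FF w A \<subseteq> fold FF w B"
proof (induction w arbitrary: A B)
  case Nil thus ?case by simp
next
  case (Cons a w)
  have "FF a A \<subseteq> FF a B" using Cons.prems by (rule FF_mono)
  thus ?case using Cons.IH by simp
qed

lemma FF_Z: "B \<subseteq> Z \<Longrightarrow> FF i B \<subseteq> Z"
proof -
  assume "B \<subseteq> Z"
  hence "f ` (B \<inter> X i) \<subseteq> Z" using fZ by blast
  thus ?thesis by (rule closure_minimal) simp
qed

lemma fold_Z: "B \<subseteq> Z \<Longrightarrow> fold FF w B \<subseteq> Z"
proof (induction w arbitrary: B)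
  case Nil thus ?case by simp
next
  case (Cons a w) thus ?case using FF_Z[OF Cons.prems] by simp
qed

lemma fold_closed: "closed B \<Longrightarrow> closed (fold FF w B)"
  by (induction w arbitrary: B) auto

definition U :: "nat \<Rightarrow> real set" where "U n = \<Union>(atomsf N c f n)"

lemma atoms_fin: "finite (atomsf N c f n)"
proof -
  have "atomsf N c f n \<subseteq> (\<lambda>w. fold FF w Z) ` {w. set w \<subseteq> {1..N} \<and> length w = n}"
    unfolding atomsf_def atoms_def by blast
  moreover have "finite {w. set w \<subseteq> {1..N::nat} \<and> length w = n}"
    by (rule finite_lists_length_eq) simp
  ultimately show ?thesis by (meson finite_imageI finite_subset)
qed

lemma atoms_closed_Z: "A \<in> atomsf N c f n \<Longrightarrow> closed A \<and> A \<subseteq> Z"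
  unfolding atomsf_def atoms_def using fold_closed fold_Z by blast

lemma U_closed: "closed (U n)"
  unfolding U_def using atoms_fin atoms_closed_Z by (intro closed_Union) auto

lemma U_Z: "U n \<subseteq> Z" unfolding U_def using atoms_closed_Z by blast

lemma U_Suc: "U (Suc n) \<subseteq> U n"
proof
  fix x assume "x \<in> U (Suc n)"
  then obtain A w where A: "x \<in> A" "length w = Suc n" "set w \<subseteq> {1..N}" "A = fold FF w Z"
    unfolding U_def atomsf_def atoms_def by blast
  then obtain i w' where w: "w = i # w'" by (cases w) auto
  have "A = fold FF w' (FF i Z)" using A(4) w by simp
  also have "\<dots> \<subseteq> fold FF w' Z" by (rule fold_mono[OF FF_Z]) simp
  finally have sub: "A \<subseteq> fold FF w' Z" .
  have "fold FF w' Z \<in> atomsf N c f n"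
    unfolding atomsf_def atoms_def using A w sub by auto
  thus "x \<in> U n" unfolding U_def using sub A(1) by blast
qed

lemma U_anti: "m \<le> n \<Longrightarrow> U n \<subseteq> U m"
  using lift_Suc_antimono_le[of U] U_Suc by blast

lemma Lam_eq: "attractor N c f = (\<Inter>n\<in>{1..}. U n)"
  unfolding attractor_def U_def by simp

lemma Lam_U1: "attractor N c f \<subseteq> U 1"
  unfolding Lam_eq by blast

lemma Lam_Z: "attractor N c f \<subseteq> Z" using Lam_U1 U_Z by blast

lemma Lam_sub_E: "x \<in> attractor N c f \<Longrightarrow> \<exists>i\<in>{1..N}. x \<in> E i"
proof -
  assume "x \<in> attractor N c f"
  hence "x \<in> U 1" using Lam_U1 by blast
  then obtain A where "A \<in> atomsf N c f 1" "x \<in> A" unfolding U_def by blast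
  thus ?thesis using atom1 by blast
qed

lemma exists_free: "\<exists>m\<in>{1..N}. E m \<inter> Dl = {}"
proof (rule ccontr)
  assume "\<not> ?thesis"
  hence "\<forall>i\<in>{1..N}. \<exists>p. p \<in> E i \<inter> Dl" by blast
  then obtain h where h: "\<forall>i\<in>{1..N}. h i \<in> E i \<inter> Dl" by metis
  have "inj_on h {1..N}"
  proof (rule inj_onI)
    fix i j assume ij: "i \<in> {1..N}" "j \<in> {1..N}" "h i = h j"
    show "i = j"
    proof (rule ccontr)
      assume "i \<noteq> j"
      hence "E i \<inter> E j = {}" using E_disj ij by blast
      thus False using h ij by (metis IntD1 disjoint_iff)
    qed
  qed
  moreover have "h ` {1..N} \<subseteq> Dl" using h by blast
  moreover have "finite Dl" unfolding Delta_def by simp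
  ultimately have "card {1..N} \<le> card Dl" by (rule card_inj_on_le)
  moreover have "card Dl \<le> card {1..N-1}" unfolding Delta_def by (rule card_image_le) simp
  ultimately show False using N2 by simp
qed

end

context setting begin
lemma iter_Z: "x \<in> Z \<Longrightarrow> (f ^^ n) x \<in> Z"
proof (induction n)
  case 0 thus ?case by simp
next
  case (Suc n)
  hence "f ((f ^^ n) x) \<in> f ` Z" by (intro imageI)
  hence "f ((f ^^ n) x) \<in> Z" using fZ by (rule subsetD[rotated])
  thus ?case by simp
qed

lemma cover: "\<exists>F. finite F \<and> (\<forall>x\<in>Z. \<exists>(S,b)\<in>F. x \<in> S) \<and> (\<forall>(S,b)\<in>F. \<forall>x\<in>S. (f ^^ n) x = lam ^ n * x + b)"
proof (induction n)
  case 0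
  show ?case by (intro exI[of _ "{(Z, 0)}"]) simp
next
  case (Suc n)
  then obtain F where F: "finite F" "\<forall>x\<in>Z. \<exists>(S,b)\<in>F. x \<in> S" "\<forall>(S,b)\<in>F. \<forall>x\<in>S. (f ^^ n) x = lam ^ n * x + b"
    by blast
  have F3: "(f ^^ n) x = lam ^ n * x + b" if "(S,b) \<in> F" "x \<in> S" for S b x
    using F(3) that by fast
  define h where "h = (\<lambda>q::(real set \<times> real) \<times> nat. ({x\<in>fst (fst q). (f ^^ n) x \<in> X (snd q)}, lam * snd (fst q) + bb (snd q)))"
  define A1 where "A1 = h ` (F \<times> {1..N})"
  define P where "P = {x\<in>Z. \<exists>S b. (S,b) \<in> F \<and> x \<in> S \<and> (f ^^ n) x \<in> Dl}"
  define A2 where "A2 = (\<lambda>x. ({x}, (f ^^ Suc n) x - lam ^ Suc n * x)) ` P"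
  have fP: "finite P"
  proof -
    have "P \<subseteq> (\<Union>q\<in>F. (\<lambda>d. (d - snd q) / lam ^ n) ` Dl)"
    proof
      fix x assume "x \<in> P"
      then obtain S b where Sb: "(S,b) \<in> F" "x \<in> S" "(f ^^ n) x \<in> Dl" unfolding P_def by blast
      have "(f ^^ n) x = lam ^ n * x + b" using F3[OF Sb(1,2)] .
      hence "x = ((f ^^ n) x - b) / lam ^ n" using lam0 by (simp add: field_simps)
      hence "x \<in> (\<lambda>d. (d - snd (S,b)) / lam ^ n) ` Dl" using Sb(3) by simp
      thus "x \<in> (\<Union>q\<in>F. (\<lambda>d. (d - snd q) / lam ^ n) ` Dl)" using Sb(1) by (rule UN_I[rotated])
    qed
    moreover have "finite (\<Union>q\<in>F. (\<lambda>d. (d - snd q) / lam ^ n) ` Dl)"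
      using F(1) by (intro finite_UN_I finite_imageI) (simp_all add: Delta_def)
    ultimately show ?thesis by (rule finite_subset)
  qed
  show ?case
  proof (intro exI[of _ "A1 \<union> A2"] conjI ballI)
    show "finite (A1 \<union> A2)" unfolding A1_def A2_def using F(1) fP by simp
  next
    fix x assume x: "x \<in> Z"
    then obtain S b where Sb: "(S,b) \<in> F" "x \<in> S" using F(2) by blast
    have fx: "(f ^^ n) x \<in> Z" using iter_Z[OF x] .
    show "\<exists>(S,b)\<in>A1 \<union> A2. x \<in> S"
    proof (cases "(f ^^ n) x \<in> Dl")
      case True
      hence "x \<in> P" unfolding P_def using x Sb by blast
      hence "({x}, (f ^^ Suc n) x - lam ^ Suc n * x) \<in> A2" unfolding A2_def by (rule imageI)
      thus ?thesis by blast
    next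
      case False
      then obtain i where i: "i \<in> {1..N}" "(f ^^ n) x \<in> X i" using in_piece[OF fx] by blast
      have "((S,b),i) \<in> F \<times> {1..N}" using Sb(1) i(1) by simp
      hence "h ((S,b),i) \<in> A1" unfolding A1_def by (rule imageI)
      moreover have "x \<in> fst (h ((S,b),i))" unfolding h_def using Sb(2) i(2) by simp
      ultimately show ?thesis by (metis (no_types, lifting) UnI1 case_prod_beta)
    qed
  next
    fix p assume "p \<in> A1 \<union> A2"
    thus "case p of (S, b) \<Rightarrow> \<forall>x\<in>S. (f ^^ Suc n) x = lam ^ Suc n * x + b"
    proof
      assume "p \<in> A1"
      then obtain q where q: "q \<in> F \<times> {1..N}" "p = h q" unfolding A1_def by (rule imageE)
      obtain S b i where qq: "q = ((S,b),i)" by (metis prod.collapse)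
      have Sb: "(S,b) \<in> F" and i: "i \<in> {1..N}" using q(1) qq by simp_all
      show ?thesis unfolding q(2) qq h_def fst_conv snd_conv prod.case
      proof
        fix x assume x: "x \<in> {x \<in> S. (f ^^ n) x \<in> X i}"
        have e1: "(f ^^ n) x = lam ^ n * x + b" using F3[OF Sb] x by simp
        have "(f ^^ Suc n) x = f ((f ^^ n) x)" by simp
        also have "\<dots> = lam * (f ^^ n) x + bb i" using bb[OF i] x by simp
        finally show "(f ^^ Suc n) x = lam ^ Suc n * x + (lam * b + bb i)"
          using e1 by (simp add: algebra_simps)
      qed
    next
      assume "p \<in> A2"
      then obtain x0 where "x0 \<in> P" "p = ({x0}, (f ^^ Suc n) x0 - lam ^ Suc n * x0)"
        unfolding A2_def by (rule imageE)
      thus ?thesis by simp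
    qed
  qed
qed

definition Fc :: "nat \<Rightarrow> (real set \<times> real) set" where
  "Fc n = (SOME F. finite F \<and> (\<forall>x\<in>Z. \<exists>(S,b)\<in>F. x \<in> S) \<and> (\<forall>(S,b)\<in>F. \<forall>x\<in>S. (f ^^ n) x = lam ^ n * x + b))"

lemma Fc_all: "finite (Fc n) \<and> (\<forall>x\<in>Z. \<exists>(S,b)\<in>Fc n. x \<in> S) \<and> (\<forall>(S,b)\<in>Fc n. \<forall>x\<in>S. (f ^^ n) x = lam ^ n * x + b)"
  unfolding Fc_def by (rule someI_ex[OF cover[of n]])

lemma Fc1: "finite (Fc n)" using Fc_all[of n] by (elim conjE)

lemma Fc2: "x \<in> Z \<Longrightarrow> \<exists>S b. (S,b) \<in> Fc n \<and> x \<in> S"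
proof -
  assume x: "x \<in> Z"
  have "\<forall>x\<in>Z. \<exists>(S,b)\<in>Fc n. x \<in> S" using Fc_all[of n] by (elim conjE)
  hence "\<exists>(S,b)\<in>Fc n. x \<in> S" using x by (rule bspec)
  thus ?thesis by fast
qed

lemma Fc3: "(S,b) \<in> Fc n \<Longrightarrow> x \<in> S \<Longrightarrow> (f ^^ n) x = lam ^ n * x + b"
proof -
  assume a: "(S,b) \<in> Fc n" "x \<in> S"
  have "\<forall>(S,b)\<in>Fc n. \<forall>x\<in>S. (f ^^ n) x = lam ^ n * x + b" using Fc_all[of n] by (elim conjE)
  hence "\<forall>x\<in>S. (f ^^ n) x = lam ^ n * x + b" using a(1) by fast
  thus ?thesis using a(2) by (rule bspec)
qed

lemma preimage_countable:
  assumes "countable T"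
  shows "countable {x\<in>Z. \<exists>n. (f ^^ n) x \<in> T}"
proof -
  have "{x\<in>Z. \<exists>n. (f ^^ n) x \<in> T} \<subseteq> (\<Union>n. \<Union>q\<in>Fc n. (\<lambda>p. (p - snd q) / lam ^ n) ` T)"
  proof
    fix x assume "x \<in> {x\<in>Z. \<exists>n. (f ^^ n) x \<in> T}"
    then obtain n where x: "x \<in> Z" "(f ^^ n) x \<in> T" by blast
    obtain S b where Sb: "(S,b) \<in> Fc n" "x \<in> S" using Fc2[OF x(1)] by blast
    have "(f ^^ n) x = lam ^ n * x + b" using Fc3[OF Sb] .
    hence "x = ((f ^^ n) x - b) / lam ^ n" using lam0 by (simp add: field_simps)
    hence "x \<in> (\<lambda>p. (p - snd (S,b)) / lam ^ n) ` T" using x(2) by simp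
    hence "x \<in> (\<Union>q\<in>Fc n. (\<lambda>p. (p - snd q) / lam ^ n) ` T)" using Sb(1) by (rule UN_I[rotated])
    thus "x \<in> (\<Union>n. \<Union>q\<in>Fc n. (\<lambda>p. (p - snd q) / lam ^ n) ` T)" by (rule UN_I[rotated]) simp
  qed
  moreover have "countable (\<Union>n. \<Union>q\<in>Fc n. (\<lambda>p. (p - snd q) / lam ^ n) ` T)"
  proof (intro countable_UN countable_image)
    show "countable T" by (rule assms)
    show "countable (Fc n)" for n using Fc1 by (rule countable_finite)
    show "countable (UNIV :: nat set)" by simp
  qed
  ultimately show ?thesis by (rule countable_subset)
qed

lemma eper_countable: "countable {x\<in>Z. \<exists>m n. m < n \<and> (f ^^ m) x = (f ^^ n) x}"
proof -
  define g where "g = (\<lambda>m n (q::real set \<times> real) (q'::real set \<times> real). (snd q' - snd q) / (lam ^ m - lam ^ n))"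
  have "{x\<in>Z. \<exists>m n. m < n \<and> (f ^^ m) x = (f ^^ n) x} \<subseteq>
        (\<Union>m. \<Union>n. \<Union>q\<in>Fc m. \<Union>q'\<in>Fc n. {g m n q q'})"
  proof
    fix x assume "x \<in> {x\<in>Z. \<exists>m n. m < n \<and> (f ^^ m) x = (f ^^ n) x}"
    then obtain m n where x: "x \<in> Z" "m < n" "(f ^^ m) x = (f ^^ n) x" by blast
    obtain S b where Sb: "(S,b) \<in> Fc m" "x \<in> S" using Fc2[OF x(1)] by blast
    obtain S' b' where Sb': "(S',b') \<in> Fc n" "x \<in> S'" using Fc2[OF x(1)] by blast
    have "lam ^ m * x + b = lam ^ n * x + b'" using Fc3[OF Sb] Fc3[OF Sb'] x(3) by simp
    moreover have "lam ^ n < lam ^ m" using x(2) lam0 lam1 by (intro power_strict_decreasing) auto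
    ultimately have "x = (b' - b) / (lam ^ m - lam ^ n)" by (simp add: field_simps)
    hence "x = g m n (S,b) (S',b')" unfolding g_def by simp
    thus "x \<in> (\<Union>m. \<Union>n. \<Union>q\<in>Fc m. \<Union>q'\<in>Fc n. {g m n q q'})"
      using Sb(1) Sb'(1) by blast
  qed
  moreover have "countable (\<Union>m. \<Union>n. \<Union>q\<in>Fc m. \<Union>q'\<in>Fc n. {g m n q q'})"
    using Fc1 by (intro countable_UN) (simp_all add: countable_finite)
  ultimately show ?thesis by (rule countable_subset)
qed

end



locale setting2 = setting +
  assumes p3: "P3 N c f" and p4: "P4 N c f" and p6: "P6 N c f"
begin

abbreviation Lam where "Lam \<equiv> attractor N c f"

lemma c_inj: "i \<le> N \<Longrightarrow> j \<le> N \<Longrightarrow> c i = c j \<Longrightarrow> i = j"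
  by (metis c_less less_irrefl nat_neq_iff)

lemma Xt_ne: "fpiece N c f 1 (c 1) \<in> Xtilde N c f"
proof -
  have "\<forall>i\<in>{1..N - 1}. fpiece N c f i (c i) \<in> Xtilde N c f \<and> fpiece N c f (i + 1) (c i) \<in> Xtilde N c f"
    using p4 unfolding P4_def .
  moreover have "(1::nat) \<in> {1..N-1}" using N2 by simp
  ultimately show ?thesis by blast
qed

lemma FF_Z_eq: "m \<in> {1..N} \<Longrightarrow> FF m Z = E m"
proof -
  assume m: "m \<in> {1..N}"
  have "Z \<inter> X m = X m" using X_Z[OF m] by blast
  thus ?thesis unfolding E_def by simp
qed

lemma EU_ne:
  assumes m: "m \<in> {1..N}" and n: "1 \<le> n"
  shows "E m \<inter> U (Suc n) \<noteq> {}"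
proof -
  define x0 where "x0 = fpiece N c f 1 (c 1)"
  have x0: "x0 \<in> Xtilde N c f" unfolding x0_def by (rule Xt_ne)
  define i0 where "i0 = (if m < N then m else N - 1)"
  have i0: "i0 \<in> {1..N-1}" using m N2 unfolding i0_def by auto
  have mi: "m = i0 \<or> m = i0 + 1" using m N2 unfolding i0_def by auto
  have "\<forall>x\<in>Xtilde N c f. \<forall>i\<in>{1..N - 1}. c i \<in> Delta_lr N c f x" using p6 unfolding P6_def .
  hence "c i0 \<in> Delta_lr N c f x0" using x0 i0 by blast
  then obtain i where i: "c i0 = c i" "i \<in> {1..N-1}"
    "\<forall>n\<ge>1. \<exists>A\<in>atoms_of_pt N c f n x0. c i \<in> A \<and>
        (\<exists>t. (f ^^ (t + n)) x0 \<in> A \<inter> piece c N i) \<and>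
        (\<exists>t'. (f ^^ (t' + n)) x0 \<in> A \<inter> piece c N (i + 1))"
    unfolding Delta_lr_def by blast
  have "i0 \<le> N" "i \<le> N" using i(2) i0 by auto
  hence "i = i0" using c_inj[of i0 i] i(1) by simp
  then obtain A where A: "A \<in> atoms_of_pt N c f n x0"
      "\<exists>t. (f ^^ (t + n)) x0 \<in> A \<inter> X i0" "\<exists>t'. (f ^^ (t' + n)) x0 \<in> A \<inter> X (i0 + 1)"
    using i(3) n by blast
  have "\<exists>y. y \<in> A \<inter> X m" using A(2,3) mi by blast
  then obtain y where y: "y \<in> A" "y \<in> X m" by blast
  have "A \<in> atomsf N c f n" using A(1) unfolding atoms_of_pt_def by blast
  then obtain w where w: "length w = n" "set w \<subseteq> {1..N}" "A = fold FF w Z"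
    unfolding atomsf_def atoms_def by blast
  have fy: "f y \<in> FF m A"
  proof -
    have "f y \<in> f ` (A \<inter> X m)" using y by blast
    thus ?thesis using closure_subset by (rule subsetD[rotated])
  qed
  have eq: "FF m A = fold FF (w @ [m]) Z" using w(3) by simp
  have "FF m A \<in> atomsf N c f (Suc n)"
    unfolding atomsf_def atoms_def using w m fy eq by (intro CollectI exI[of _ "w @ [m]"]) auto
  hence "f y \<in> U (Suc n)" unfolding U_def using fy by blast
  moreover have "FF m A \<subseteq> E m"
  proof -
    have "A \<subseteq> Z" using w(3) fold_Z by simp
    hence "FF m A \<subseteq> FF m Z" by (rule FF_mono)
    thus ?thesis using FF_Z_eq[OF m] by simp
  qed
  ultimately show ?thesis using fy by blast
qed

lemma Lam_compact: "compact Lam" using p3 unfolding P3_def cantor_set_def by (elim conjE)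
lemma Lam_perfect: "\<forall>x\<in>Lam. x islimpt Lam" using p3 unfolding P3_def cantor_set_def by (elim conjE)

lemma LamE_ne:
  assumes m: "m \<in> {1..N}"
  shows "Lam \<inter> E m \<noteq> {}"
proof -
  define F where "F = (\<lambda>k. E m \<inter> U (k + 2))"
  have "\<Inter>(range F) \<noteq> {}"
  proof (rule compact_nest)
    show "compact (F k)" for k unfolding F_def
      using E_eq[OF m] U_closed by (intro compact_Int_closed) simp_all
    show "F k \<noteq> {}" for k unfolding F_def using EU_ne[OF m, of "k+1"] by simp
    show "F k' \<subseteq> F k" if "k \<le> k'" for k k' unfolding F_def using U_anti[of "k+2" "k'+2"] that by auto
  qed
  then obtain z where z: "z \<in> \<Inter>(range F)" by blast
  have "z \<in> E m" using z unfolding F_def by blast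
  moreover have "z \<in> U n" if "n \<in> {1..}" for n
  proof -
    have "z \<in> U (n + 2)" using z unfolding F_def by blast
    thus ?thesis using U_anti[of n "n+2"] by auto
  qed
  hence "z \<in> Lam" unfolding Lam_eq by blast
  ultimately show ?thesis by blast
qed

lemma S_uncountable:
  assumes m: "m \<in> {1..N}"
  shows "uncountable (Lam \<inter> E m)"
proof (rule perfect_uncountable)
  show "closed (Lam \<inter> E m)" using compact_imp_closed[OF Lam_compact] E_closed[of m] by (rule closed_Int)
  show "Lam \<inter> E m \<noteq> {}" by (rule LamE_ne[OF m])
  show "\<forall>x\<in>Lam \<inter> E m. x islimpt Lam \<inter> E m"
  proof
    fix x assume x: "x \<in> Lam \<inter> E m"
    define C where "C = (\<Union>i\<in>{1..N} - {m}. E i)"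
    have cC: "closed C" unfolding C_def using E_closed by (intro closed_UN) simp_all
    have xC: "x \<notin> C"
    proof
      assume "x \<in> C"
      then obtain i where "i \<in> {1..N} - {m}" "x \<in> E i" unfolding C_def by blast
      thus False using E_disj[of i m] x m by blast
    qed
    have lp: "x islimpt Lam" using Lam_perfect x by blast
    show "x islimpt Lam \<inter> E m"
      unfolding islimpt_def
    proof (intro allI impI)
      fix T assume T: "x \<in> T" "open T"
      have "x \<in> T - C" "open (T - C)" using T xC cC by auto
      then obtain y where y: "y \<in> Lam" "y \<in> T - C" "y \<noteq> x" using lp unfolding islimpt_def by blast
      obtain i where i: "i \<in> {1..N}" "y \<in> E i" using Lam_sub_E[OF y(1)] by blast
      have "i = m"
      proof (rule ccontr)
        assume "i \<noteq> m"
        hence "y \<in> C" unfolding C_def using i by blast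
        thus False using y by blast
      qed
      thus "\<exists>y\<in>Lam \<inter> E m. y \<in> T \<and> y \<noteq> x" using y i by blast
    qed
  qed
qed

lemma good_xi:
  assumes m: "m \<in> {1..N}"
  shows "\<exists>xi0. well_cutting N c f xi0 \<and> xi0 \<in> E m \<and> (\<forall>a b. (f ^^ a) xi0 = (f ^^ b) xi0 \<longrightarrow> a = b)"
proof -
  define T where "T = gap_endpoints Lam \<union> orbit f (c 0) \<union> orbit f (c N) \<union>
     (\<Union>i\<in>{1..N-1}. orbit f (fpiece N c f i (c i)) \<union> orbit f (fpiece N c f (i+1) (c i))) \<union> Dl"
  have cT: "countable T" unfolding T_def orbit_def Delta_def
    using gap_countable[OF compact_imp_closed[OF Lam_compact]] by simp
  define B where "B = {x\<in>Z. \<exists>n. (f ^^ n) x \<in> T} \<union> {x\<in>Z. \<exists>m n. m < n \<and> (f ^^ m) x = (f ^^ n) x}"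
  have cB: "countable B" unfolding B_def using preimage_countable[OF cT] eper_countable by simp
  have "uncountable ((Lam \<inter> E m) - B)" using S_uncountable[OF m] cB by (rule uncountable_minus_countable)
  then obtain xi0 where xi: "xi0 \<in> Lam" "xi0 \<in> E m" "xi0 \<notin> B"
    by (metis Diff_iff IntE countable_empty equals0I)
  have xZ: "xi0 \<in> Z" using xi(1) Lam_Z by blast
  have nT: "(f ^^ n) xi0 \<notin> T" for n using xi(3) xZ unfolding B_def by blast
  have inj: "(f ^^ a) xi0 = (f ^^ b) xi0 \<longrightarrow> a = b" for a b
  proof
    assume e: "(f ^^ a) xi0 = (f ^^ b) xi0"
    show "a = b"
    proof (rule ccontr)
      assume "a \<noteq> b"
      hence "a < b \<or> b < a" by arith
      hence "xi0 \<in> B" unfolding B_def using xZ e by (metis (mono_tags, lifting) CollectI UnI2)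
      thus False using xi(3) by simp
    qed
  qed
  have Xt: "xi0 \<in> Xtilde N c f"
    unfolding Xtilde_def
  proof
    fix n :: nat
    have "(f ^^ n) xi0 \<in> Z" by (rule iter_Z[OF xZ])
    moreover have "(f ^^ n) xi0 \<notin> Dl" using nT[of n] unfolding T_def by blast
    ultimately show "xi0 \<in> (f ^^ n) -` (Z - Dl)" by simp
  qed
  have o: "orbit f xi0 \<inter> S = {}" if "S \<subseteq> T" for S
  proof -
    have "y \<notin> S" if "y \<in> orbit f xi0" for y
      using that nT \<open>S \<subseteq> T\<close> unfolding orbit_def by blast
    thus ?thesis by blast
  qed
  have wc: "well_cutting N c f xi0"
    unfolding well_cutting_def
  proof (intro conjI ballI)
    show "xi0 \<in> Lam \<inter> Xtilde N c f" using xi(1) Xt by simp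
    show "orbit f xi0 \<inter> gap_endpoints Lam = {}" by (rule o, unfold T_def, blast)
    show "orbit f xi0 \<inter> orbit f (c 0) = {}" by (rule o, unfold T_def, blast)
    show "orbit f xi0 \<inter> orbit f (c N) = {}" by (rule o, unfold T_def, blast)
    fix i assume i: "i \<in> {1..N-1}"
    show "orbit f xi0 \<inter> orbit f (fpiece N c f i (c i)) = {}"
      by (rule o) (unfold T_def, use i in blast)
    show "orbit f xi0 \<inter> orbit f (fpiece N c f (i+1) (c i)) = {}"
      by (rule o) (unfold T_def, use i in blast)
  qed
  show ?thesis using wc xi(2) inj by blast
qed

end



locale final = setting2 +
  fixes xi0 :: real and m :: nat
  assumes m: "m \<in> {1..N}" and Em: "E m \<inter> Dl = {}" and wc: "well_cutting N c f xi0"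
    and xiE: "xi0 \<in> E m" and xinj: "\<forall>a b. (f ^^ a) xi0 = (f ^^ b) xi0 \<longrightarrow> a = b"
    and H: "\<forall>A\<in>atomsf N c f 1. \<forall>x\<in>A \<inter> Dl. \<forall>y\<in>A \<inter> Dl. x = y"
begin

sublocale O: orbi f lam xi0
  using lam0 lam1 xinj by unfold_locales auto

abbreviation ph where "ph \<equiv> phi f lam xi0"

lemma xi_Z: "O.xi n \<in> Z" and xi_nD: "O.xi n \<notin> Dl"
proof -
  have "xi0 \<in> Xtilde N c f" using wc unfolding well_cutting_def by blast
  hence "xi0 \<in> (f ^^ n) -` (Z - Dl)" unfolding Xtilde_def by blast
  thus "O.xi n \<in> Z" "O.xi n \<notin> Dl" unfolding O.xi_def by auto
qed

lemma xi0_Z: "xi0 \<in> Z" using xi_Z[of 0] unfolding O.xi_def by simp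
lemma xi0_nD: "xi0 \<notin> Dl" using xi_nD[of 0] unfolding O.xi_def by simp

lemma xi0_ne: "xi0 \<noteq> c 0" "xi0 \<noteq> c N"
proof -
  have a: "orbit f xi0 \<inter> orbit f (c 0) = {}" "orbit f xi0 \<inter> orbit f (c N) = {}"
    using wc unfolding well_cutting_def by blast+
  have "xi0 \<in> orbit f xi0" unfolding orbit_def by (rule range_eqI[of _ _ 0]) simp
  moreover have "c 0 \<in> orbit f (c 0)" "c N \<in> orbit f (c N)" unfolding orbit_def
    by (rule range_eqI[of _ _ 0], simp)+
  ultimately show "xi0 \<noteq> c 0" "xi0 \<noteq> c N" using a by blast+
qed

lemma DX_bounds: "p \<in> Dl \<union> {xi0} \<Longrightarrow> c 0 < p \<and> p < c N"
proof -
  assume p: "p \<in> Dl \<union> {xi0}"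
  show ?thesis
  proof (cases "p = xi0")
    case True thus ?thesis using xi0_Z xi0_ne by auto
  next
    case False thus ?thesis using p Delta_bounds by blast
  qed
qed

lemma Eprop:
  assumes i: "i \<in> {1..N}" and p: "p \<in> E i" "p \<in> Dl \<union> {xi0}" and q: "q \<in> E i" "q \<in> Dl \<union> {xi0}"
  shows "p = q"
proof (cases "i = m")
  case True
  thus ?thesis using Em p q by blast
next
  case False
  have "xi0 \<notin> E i" using E_disj[OF i m False] xiE by blast
  hence "p \<in> E i \<inter> Dl" "q \<in> E i \<inter> Dl" using p q by auto
  thus ?thesis using H E_atom[OF i] by blast
qed

definition Ds where "Ds = ph ` (c ` {0..N} \<union> {xi0})"
definition L where "L = sorted_list_of_set Ds"

lemma ph_inj: "ph x = ph y \<Longrightarrow> x = y"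
  using O.ph_strict by (metis less_irrefl linorder_neqE)

lemma Ds_fin: "finite Ds" unfolding Ds_def by simp

lemma Ds_card: "card Ds = N + 2"
proof -
  have "inj_on ph (c ` {0..N} \<union> {xi0})" by (rule inj_onI) (rule ph_inj)
  hence "card Ds = card (c ` {0..N} \<union> {xi0})" unfolding Ds_def by (rule card_image)
  moreover have "xi0 \<notin> c ` {0..N}"
  proof
    assume "xi0 \<in> c ` {0..N}"
    then obtain k where k: "k \<in> {0..N}" "xi0 = c k" by blast
    have "k \<noteq> 0" using k(2) xi0_ne(1) by metis
    moreover have "k \<noteq> N" using k(2) xi0_ne(2) by metis
    ultimately have "k \<in> {1..N-1}" using k(1) by auto
    hence "xi0 \<in> Dl" unfolding Delta_def using k(2) by (rule rev_image_eqI)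
    thus False using xi0_nD by simp
  qed
  moreover have "card (c ` {0..N}) = N + 1"
  proof -
    have "inj_on c {0..N}" by (rule inj_onI) (use c_inj in auto)
    thus ?thesis by (simp add: card_image)
  qed
  ultimately show ?thesis by simp
qed

lemma L_len: "length L = N + 2" unfolding L_def using Ds_card by simp
lemma L_set: "set L = Ds" unfolding L_def using Ds_fin by simp
lemma L_sorted: "sorted_wrt (<) L" unfolding L_def by (rule strict_sorted_list_of_set)

lemma L_less: "i < j \<Longrightarrow> j < N + 2 \<Longrightarrow> L ! i < L ! j"
  using sorted_wrt_nth_less[OF L_sorted] L_len by simp

lemma L_le: "i \<le> j \<Longrightarrow> j < N + 2 \<Longrightarrow> L ! i \<le> L ! j"
  using L_less by (cases "i = j") (auto simp: order_le_less)

lemma L_rev: "i < N + 2 \<Longrightarrow> j < N + 2 \<Longrightarrow> L ! i < L ! j \<Longrightarrow> i < j"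
  using L_le by (meson leD le_less_linear)

lemma in_Ds: "e \<in> Ds \<Longrightarrow> \<exists>k<N+2. e = L ! k"
  using L_set L_len by (metis in_set_conv_nth)

abbreviation Y where "Y \<equiv> piece (dpts N c f lam xi0) (N + 1)"

lemma dpts_L: "dpts N c f lam xi0 = (\<lambda>j. L ! j)"
  unfolding dpts_def L_def Ds_def by (rule ext) simp

lemma Y_iff: "j \<in> {1..N+1} \<Longrightarrow> y \<in> Y j \<longleftrightarrow>
   L ! (j-1) \<le> y \<and> y \<le> L ! j \<and> (j \<noteq> 1 \<longrightarrow> L ! (j-1) < y) \<and> (j \<noteq> N + 1 \<longrightarrow> y < L ! j)"
proof -
  assume j: "j \<in> {1..N+1}"
  have "2 \<le> N + 1" using N2 by simp
  from piece_iff[OF this j, of y "dpts N c f lam xi0"] show ?thesis unfolding dpts_L .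
qed

lemma Yno:
  assumes j: "j \<in> {1..N+1}" and y: "y \<in> Y j" "y' \<in> Y j" and e: "y < e" "e < y'" "e \<in> Ds"
  shows False
proof -
  obtain k where k: "k < N + 2" "e = L ! k" using in_Ds[OF e(3)] by blast
  have "L ! (j-1) < L ! k" using Y_iff[OF j] y(1) e k by auto
  hence "j - 1 < k" using L_rev[of "j-1" k] j k by auto
  moreover have "L ! k < L ! j" using Y_iff[OF j] y(2) e k by auto
  hence "k < j" using L_rev[of k j] j k by auto
  ultimately show False by simp
qed

lemma YnoDg:
  assumes j: "j \<in> {1..N+1}" and y: "y \<in> Y j" and p: "p \<in> Dl \<union> {xi0}" and yp: "y = ph p"
  shows False
proof -
  have pb: "c 0 < p" "p < c N" using DX_bounds[OF p] by auto
  have "y \<in> Ds" unfolding Ds_def yp using p Delta_def by auto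
  then obtain k where k: "k < N + 2" "y = L ! k" using in_Ds by blast
  have "ph (c 0) \<in> Ds" "ph (c N) \<in> Ds" unfolding Ds_def by auto
  then obtain k0 kN where k0: "k0 < N + 2" "ph (c 0) = L ! k0" and kN: "kN < N + 2" "ph (c N) = L ! kN"
    using in_Ds by metis
  have "k0 < k" using L_rev[OF k0(1) k(1)] O.ph_strict[OF pb(1)] k0 k yp by simp
  moreover have "k < kN" using L_rev[OF k(1) kN(1)] O.ph_strict[OF pb(2)] kN k yp by simp
  ultimately have k1: "1 \<le> k" "k \<le> N" using kN by auto
  have a: "L ! (j-1) \<le> L ! k" "L ! k \<le> L ! j" using Y_iff[OF j] y k by auto
  have "j - 1 \<le> k"
  proof (rule ccontr)
    assume "\<not> j - 1 \<le> k"
    hence "L ! k < L ! (j-1)" using L_less j by auto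
    thus False using a by simp
  qed
  moreover have "k \<le> j"
  proof (rule ccontr)
    assume "\<not> k \<le> j"
    hence "L ! j < L ! k" using L_less k by auto
    thus False using a by simp
  qed
  ultimately have "k = j - 1 \<or> k = j" by auto
  thus False
  proof
    assume "k = j - 1"
    hence "j \<noteq> 1" using k1 by auto
    thus False using Y_iff[OF j] y k \<open>k = j - 1\<close> by auto
  next
    assume "k = j"
    hence "j \<noteq> N + 1" using k1 by auto
    thus False using Y_iff[OF j] y k \<open>k = j\<close> by auto
  qed
qed

end



context final begin

abbreviation Zg where "Zg \<equiv> {ph (c 0)..ph (c N)}"

lemma assoc:
  assumes g: "constructed_map N c f lam xi0 g" and j: "j \<in> {1..N+1}" and y: "y \<in> Zg" "y \<in> Y j"
  shows "\<exists>x i. i \<in> {1..N} \<and> x \<in> X i \<and> ph x \<le> y \<and> y \<le> O.phiR x \<and>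
     ph (ea i) \<le> g y \<and> g y \<le> O.phiR (eb i)"
proof -
  have cm1: "\<forall>x\<in>Z. ph x \<notin> ph ` (Dl \<union> {xi0}) \<longrightarrow> g (ph x) = ph (f x)"
    using g unfolding constructed_map_def Let_def by (elim conjE)
  have cm2: "\<forall>r\<ge>1. \<forall>y\<in>{ph (O.xi r)<..ph (O.xi r) + lam ^ r}. g y = lam * (y - ph (O.xi r)) + ph (O.xi (r + 1))"
    using g unfolding constructed_map_def Let_def O.xi_def by (elim conjE)
  have c0N: "c 0 \<le> c N" using c_le[of 0 N] by simp
  have "(\<exists>x\<in>Z. y = ph x) \<or> (\<exists>r\<ge>1. ph (O.xi r) < y \<and> y \<le> ph (O.xi r) + lam ^ r)"
    using O.Cov[OF c0N] y(1) by simp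
  thus ?thesis
  proof
    assume "\<exists>x\<in>Z. y = ph x"
    then obtain x where x: "x \<in> Z" "y = ph x" by blast
    have nD: "x \<notin> Dl \<union> {xi0}"
    proof
      assume "x \<in> Dl \<union> {xi0}"
      thus False using YnoDg[OF j y(2) _ x(2)] by blast
    qed
    have "ph x \<notin> ph ` (Dl \<union> {xi0})"
    proof
      assume "ph x \<in> ph ` (Dl \<union> {xi0})"
      then obtain p where "p \<in> Dl \<union> {xi0}" "ph x = ph p" by blast
      thus False using nD ph_inj by metis
    qed
    hence gy: "g y = ph (f x)" using cm1 x by simp
    obtain i where i: "i \<in> {1..N}" "x \<in> X i" using in_piece[OF x(1)] nD by blast
    have "f x \<in> f ` X i" using i(2) by (rule imageI)
    hence "f x \<in> E i" unfolding E_def using closure_subset by (rule subsetD[rotated])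
    hence fx: "ea i \<le> f x" "f x \<le> eb i" using E_eq[OF i(1)] by auto
    have "ph (ea i) \<le> g y" using O.ph_mono[OF fx(1)] gy by simp
    moreover have "g y \<le> O.phiR (eb i)"
      using O.M2[of "f x"] O.phiR_mono[OF fx(2)] gy by simp
    moreover have "ph x \<le> y" "y \<le> O.phiR x" using x(2) O.M2[of x] by simp_all
    ultimately show ?thesis using i by blast
  next
    assume "\<exists>r\<ge>1. ph (O.xi r) < y \<and> y \<le> ph (O.xi r) + lam ^ r"
    then obtain r where r: "r \<ge> 1" "ph (O.xi r) < y" "y \<le> ph (O.xi r) + lam ^ r" by blast
    have "y \<in> {ph (O.xi r)<..ph (O.xi r) + lam ^ r}" using r by simp
    hence gy: "g y = lam * (y - ph (O.xi r)) + ph (O.xi (r + 1))" using cm2 r(1) by blast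
    obtain i where i: "i \<in> {1..N}" "O.xi r \<in> X i" using in_piece[OF xi_Z xi_nD] by blast
    have xs: "O.xi (r + 1) = f (O.xi r)" unfolding O.xi_def by simp
    have "f (O.xi r) \<in> f ` X i" using i(2) by (rule imageI)
    hence "O.xi (r+1) \<in> E i" unfolding E_def xs using closure_subset by (rule subsetD[rotated])
    hence fx: "ea i \<le> O.xi (r+1)" "O.xi (r+1) \<le> eb i" using E_eq[OF i(1)] by auto
    have d: "0 < y - ph (O.xi r)" "y - ph (O.xi r) \<le> lam ^ r" using r by auto
    have "0 < lam * (y - ph (O.xi r))" using d lam0 by simp
    hence g1: "ph (O.xi (r+1)) < g y" using gy by simp
    have "lam * (y - ph (O.xi r)) \<le> lam * lam ^ r" using d lam0 by simp
    hence g2: "g y \<le> ph (O.xi (r+1)) + lam ^ (r+1)" using gy by simp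
    have "ph (ea i) \<le> g y" using O.ph_mono[OF fx(1)] g1 by simp
    moreover have "g y \<le> O.phiR (eb i)"
      using g2 O.M3[of "r+1"] O.phiR_mono[OF fx(2)] by simp
    moreover have "ph (O.xi r) \<le> y" "y \<le> O.phiR (O.xi r)" using r O.M3[of r] by simp_all
    ultimately show ?thesis using i by blast
  qed
qed

lemma main:
  assumes g: "constructed_map N c f lam xi0 g" and A: "A \<in> atoms_g N c f lam xi0 g 1"
    and u: "u \<in> A \<inter> Delta_g N c f lam xi0" and v: "v \<in> A \<inter> Delta_g N c f lam xi0"
  shows "u = v"
proof -
  obtain w where w: "length w = 1" "set w \<subseteq> {1..N+1}"
    "A = fold (\<lambda>i B. closure (g ` (B \<inter> Y i))) w Zg" "A \<noteq> {}"
    using A unfolding atoms_g_def atoms_def by blast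
  then obtain j where wj: "w = [j]" by (cases w) auto
  have j: "j \<in> {1..N+1}" using w(2) wj by simp
  have Aeq: "A = closure (g ` (Zg \<inter> Y j))" using w(3) wj by simp
  have "Zg \<inter> Y j \<noteq> {}" using w(4) Aeq by auto
  then obtain y0 where y0: "y0 \<in> Zg" "y0 \<in> Y j" by blast
  obtain x0 i0 where x0: "i0 \<in> {1..N}" "x0 \<in> X i0" "ph x0 \<le> y0" "y0 \<le> O.phiR x0"
    using assoc[OF g j y0] by blast
  have bnd: "g y \<in> {ph (ea i0)..O.phiR (eb i0)}" if y: "y \<in> Zg \<inter> Y j" for y
  proof -
    obtain x i where xi: "i \<in> {1..N}" "x \<in> X i" "ph x \<le> y" "y \<le> O.phiR x"
      "ph (ea i) \<le> g y" "g y \<le> O.phiR (eb i)"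
      using assoc[OF g j] y by blast
    have "i = i0"
    proof (rule ccontr)
      assume ne: "i \<noteq> i0"
      show False
      proof (cases "i < i0")
        case True
        have po: "x < c i" "c i < x0" "c i \<in> Dl" using piece_order[OF xi(1) x0(1) True xi(2) x0(2)] by auto
        have e: "ph (c i) \<in> Ds" unfolding Ds_def using po(3) Delta_def by auto
        have "y < ph (c i)" using xi(4) O.M1[OF po(1)] by simp
        moreover have "ph (c i) < y0" using O.ph_strict[OF po(2)] x0(3) by simp
        ultimately show False using Yno[OF j _ y0(2) _ _ e] y by blast
      next
        case False
        hence lt: "i0 < i" using ne by simp
        have po: "x0 < c i0" "c i0 < x" "c i0 \<in> Dl" using piece_order[OF x0(1) xi(1) lt x0(2) xi(2)] by auto
        have e: "ph (c i0) \<in> Ds" unfolding Ds_def using po(3) Delta_def by auto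
        have "y0 < ph (c i0)" using x0(4) O.M1[OF po(1)] by simp
        moreover have "ph (c i0) < y" using O.ph_strict[OF po(2)] xi(3) by simp
        ultimately show False using Yno[OF j y0(2) _ _ _ e] y by blast
      qed
    qed
    thus ?thesis using xi by simp
  qed
  have "g ` (Zg \<inter> Y j) \<subseteq> {ph (ea i0)..O.phiR (eb i0)}" using bnd by blast
  hence Asub: "A \<subseteq> {ph (ea i0)..O.phiR (eb i0)}" unfolding Aeq by (rule closure_minimal) simp
  have pt: "\<exists>p. p \<in> E i0 \<and> p \<in> Dl \<union> {xi0} \<and> z = ph p" if z: "z \<in> A \<inter> Delta_g N c f lam xi0" for z
  proof -
    obtain p where p: "p \<in> Dl \<union> {xi0}" "z = ph p" using z unfolding Delta_g_def by blast
    have zb: "ph (ea i0) \<le> ph p" "ph p \<le> O.phiR (eb i0)" using z Asub p(2) by auto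
    have "ea i0 \<le> p"
    proof (rule ccontr)
      assume "\<not> ea i0 \<le> p"
      hence "ph p < ph (ea i0)" using O.ph_strict by simp
      thus False using zb by simp
    qed
    moreover have "p \<le> eb i0"
    proof (rule ccontr)
      assume "\<not> p \<le> eb i0"
      hence "O.phiR (eb i0) < ph p" using O.M1 by simp
      thus False using zb by simp
    qed
    ultimately have "p \<in> E i0" using E_eq[OF x0(1)] by simp
    thus ?thesis using p by blast
  qed
  obtain p where p: "p \<in> E i0" "p \<in> Dl \<union> {xi0}" "u = ph p" using pt[OF u] by blast
  obtain q where q: "q \<in> E i0" "q \<in> Dl \<union> {xi0}" "v = ph q" using pt[OF v] by blast
  have "p = q" using Eprop[OF x0(1) p(1,2) q(1,2)] .
  thus ?thesis using p q by simp
qed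

end

theorem lemma9:
  fixes N :: nat and c :: "nat \<Rightarrow> real" and f :: "real \<Rightarrow> real" and lam :: real
  assumes "N \<ge> 2"
    and "strict_mono_on {0..N} c"
    and "f ` {c 0..c N} \<subseteq> {c 0..c N}"
    and "P1 N c f lam" and "P2 N c f" and "P3 N c f" and "P4 N c f" and "P5 N c f" and "P6 N c f"
    and "\<forall>A\<in>atomsf N c f 1. \<forall>x\<in>A \<inter> Delta N c. \<forall>y\<in>A \<inter> Delta N c. x = y"
  shows "\<exists>xi0. well_cutting N c f xi0 \<and>
     (\<forall>g. constructed_map N c f lam xi0 g \<longrightarrow>
        (\<forall>A\<in>atoms_g N c f lam xi0 g 1.
           \<forall>x\<in>A \<inter> Delta_g N c f lam xi0. \<forall>y\<in>A \<inter> Delta_g N c f lam xi0. x = y))"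
proof -
  interpret S: setting2 N c f lam
    using assms by unfold_locales auto
  obtain m where m: "m \<in> {1..N}" "S.E m \<inter> Delta N c = {}" using S.exists_free by blast
  obtain xi0 where xi0: "well_cutting N c f xi0" "xi0 \<in> S.E m"
      "\<forall>a b. (f ^^ a) xi0 = (f ^^ b) xi0 \<longrightarrow> a = b"
    using S.good_xi[OF m(1)] by blast
  interpret F: final N c f lam xi0 m
    using m xi0 assms(10) by unfold_locales auto
  show ?thesis
    using xi0(1) F.main by blast
qed


end
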